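(* Let $\mathcal{A}=(\mathcal{T},c)$ be a DPA with $\mathcal{T}=(\Sigma,Q,\delta,q_0)$, let $\mathcal{D}$ be a DPA with $D:=L(\mathcal{D})$, let $\mathcal{T}'=(\Sigma,Q',\delta',q_0')$ be a deterministic transition system and $h:\mathcal{T}\to\mathcal{T}'$ a surjective homomorphism. Define $\mathcal{F}_0'=\{R'\subseteq Q'\mid \exists\alpha\in L(\mathcal{A})\setminus D: h(\mathrm{Inf}_{\mathcal{A}}(\alpha))=R'\}$ and $\mathcal{F}_1'=\{R'\subseteq Q'\mid \exists\alpha\in (\Sigma^\omega\setminus L(\mathcal{A}))\setminus D: h(\mathrm{Inf}_{\mathcal{A}}(\alpha))=R'\}$, where $h(P)=\{h(q)\mid q\in P\}$. Then for every priority function $c':Q'\to\mathbb{N}$: $L(\mathcal{T}',c')\equiv_D L(\mathcal{T},c)$ if and only if $c'$ is consistent with $(\mathcal{F}_0',\mathcal{F}_1')$, i.e., $\max c'(R')$ is even for all $R'\in\mathcal{F}_0'$ and odd for all $R'\in\mathcal{F}_1'$.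
   Context: A deterministic transition system is $\mathcal{T}=(\Sigma,Q,\delta,q_0)$ with finite alphabet, finite state set, transition function $\delta:Q\times\Sigma\to Q$, initial state $q_0$, all states reachable. $\mathrm{Inf}_{\mathcal{T}}(\alpha)$ (or $\mathrm{Inf}_{\mathcal{A}}(\alpha)$) is the set of states visited infinitely often by the run of $\alpha\in\Sigma^\omega$ from $q_0$. A DPA $(\mathcal{T},c)$ with $c:Q\to\mathbb{N}$ accepts those $\alpha$ for which $\max c(\mathrm{Inf}_{\mathcal{T}}(\alpha))$ is even, where $c(P)=\{c(p)\mid p\in P\}$. A homomorphism $h:\mathcal{T}\to\mathcal{T}'$ is a map $h:Q\to Q'$ with $h(q_0)=q_0'$ and $h(\delta(q,a))=\delta'(h(q),a)$. $L\equiv_D L'$ means $L\setminus D=L'\setminus D$. *)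

theory Defs
  imports Main
begin

definition dts :: "'a set \<Rightarrow> 'q set \<Rightarrow> ('q \<Rightarrow> 'a \<Rightarrow> 'q) \<Rightarrow> 'q \<Rightarrow> bool" where
  "dts \<Sigma> Q \<delta> q0 \<longleftrightarrow> finite \<Sigma> \<and> finite Q \<and> q0 \<in> Q \<and>
     (\<forall>q\<in>Q. \<forall>a\<in>\<Sigma>. \<delta> q a \<in> Q) \<and>
     (\<forall>q\<in>Q. \<exists>w. set w \<subseteq> \<Sigma> \<and> foldl \<delta> q0 w = q)"

definition omega_words :: "'a set \<Rightarrow> (nat \<Rightarrow> 'a) set" where
  "omega_words \<Sigma> = {\<alpha>. \<forall>n. \<alpha> n \<in> \<Sigma>}"

fun run :: "('q \<Rightarrow> 'a \<Rightarrow> 'q) \<Rightarrow> 'q \<Rightarrow> (nat \<Rightarrow> 'a) \<Rightarrow> nat \<Rightarrow> 'q" where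
  "run \<delta> q \<alpha> 0 = q"
| "run \<delta> q \<alpha> (Suc n) = \<delta> (run \<delta> q \<alpha> n) (\<alpha> n)"

definition Inf_states :: "('q \<Rightarrow> 'a \<Rightarrow> 'q) \<Rightarrow> 'q \<Rightarrow> (nat \<Rightarrow> 'a) \<Rightarrow> 'q set" where
  "Inf_states \<delta> q0 \<alpha> = {q. \<exists>\<^sub>\<infinity>n. run \<delta> q0 \<alpha> n = q}"

definition dpa_lang :: "'a set \<Rightarrow> ('q \<Rightarrow> 'a \<Rightarrow> 'q) \<Rightarrow> 'q \<Rightarrow> ('q \<Rightarrow> nat) \<Rightarrow> (nat \<Rightarrow> 'a) set" where
  "dpa_lang \<Sigma> \<delta> q0 c = {\<alpha> \<in> omega_words \<Sigma>. even (Max (c ` Inf_states \<delta> q0 \<alpha>))}"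

definition dts_hom :: "'a set \<Rightarrow> 'q set \<Rightarrow> ('q \<Rightarrow> 'a \<Rightarrow> 'q) \<Rightarrow> 'q \<Rightarrow>
    'p set \<Rightarrow> ('p \<Rightarrow> 'a \<Rightarrow> 'p) \<Rightarrow> 'p \<Rightarrow> ('q \<Rightarrow> 'p) \<Rightarrow> bool" where
  "dts_hom \<Sigma> Q \<delta> q0 Q' \<delta>' q0' h \<longleftrightarrow> (\<forall>q\<in>Q. h q \<in> Q') \<and> h q0 = q0' \<and>
     (\<forall>q\<in>Q. \<forall>a\<in>\<Sigma>. h (\<delta> q a) = \<delta>' (h q) a)"

definition equiv_mod :: "(nat \<Rightarrow> 'a) set \<Rightarrow> (nat \<Rightarrow> 'a) set \<Rightarrow> (nat \<Rightarrow> 'a) set \<Rightarrow> bool" where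
  "equiv_mod D L L' \<longleftrightarrow> L - D = L' - D"

definition consistent :: "('p \<Rightarrow> nat) \<Rightarrow> 'p set set \<Rightarrow> 'p set set \<Rightarrow> bool" where
  "consistent c' F0 F1 \<longleftrightarrow> (\<forall>R\<in>F0. even (Max (c' ` R))) \<and> (\<forall>R\<in>F1. odd (Max (c' ` R)))"

end

theory Submission
  imports Defs
begin

lemma run_in:
  assumes "dts \<Sigma> Q \<delta> q0" "\<alpha> \<in> omega_words \<Sigma>"
  shows "run \<delta> q0 \<alpha> n \<in> Q"
  using assms by (induction n) (auto simp: dts_def omega_words_def)

lemma run_hom:
  assumes "dts \<Sigma> Q \<delta> q0" "\<alpha> \<in> omega_words \<Sigma>" "dts_hom \<Sigma> Q \<delta> q0 Q' \<delta>' q0' h"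
  shows "run \<delta>' q0' \<alpha> n = h (run \<delta> q0 \<alpha> n)"
proof (induction n)
  case 0 then show ?case using assms(3) by (simp add: dts_hom_def)
next
  case (Suc n)
  have "run \<delta> q0 \<alpha> n \<in> Q" using run_in[OF assms(1,2)] .
  moreover have "\<alpha> n \<in> \<Sigma>" using assms(2) by (simp add: omega_words_def)
  ultimately show ?case using Suc assms(3) by (simp add: dts_hom_def)
qed

lemma inf_image:
  fixes f :: "nat \<Rightarrow> 'q"
  assumes "finite Q" "\<And>n. f n \<in> Q"
  shows "{p. \<exists>\<^sub>\<infinity>n. h (f n) = p} = h ` {q. \<exists>\<^sub>\<infinity>n. f n = q}"
proof
  show "h ` {q. \<exists>\<^sub>\<infinity>n. f n = q} \<subseteq> {p. \<exists>\<^sub>\<infinity>n. h (f n) = p}"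
    by (auto elim: frequently_elim1)
next
  show "{p. \<exists>\<^sub>\<infinity>n. h (f n) = p} \<subseteq> h ` {q. \<exists>\<^sub>\<infinity>n. f n = q}"
  proof
    fix p assume "p \<in> {p. \<exists>\<^sub>\<infinity>n. h (f n) = p}"
    hence inf: "infinite {n. h (f n) = p}" by (simp add: frequently_cofinite)
    have eq: "{n. h (f n) = p} = (\<Union>q\<in>{q\<in>Q. h q = p}. {n. f n = q})"
      using assms(2) by auto
    have "\<exists>q\<in>{q\<in>Q. h q = p}. infinite {n. f n = q}"
    proof (rule ccontr)
      assume "\<not> ?thesis"
      hence "finite (\<Union>q\<in>{q\<in>Q. h q = p}. {n. f n = q})" using assms(1) by auto
      thus False using inf eq by simp
    qed
    then obtain q where "q \<in> Q" "h q = p" "infinite {n. f n = q}" by auto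
    thus "p \<in> h ` {q. \<exists>\<^sub>\<infinity>n. f n = q}" by (auto simp: frequently_cofinite)
  qed
qed

lemma Inf_sub:
  assumes "dts \<Sigma> Q \<delta> q0" "\<alpha> \<in> omega_words \<Sigma>"
  shows "Inf_states \<delta> q0 \<alpha> \<subseteq> Q"
proof
  fix q assume "q \<in> Inf_states \<delta> q0 \<alpha>"
  then obtain n where "run \<delta> q0 \<alpha> n = q" unfolding Inf_states_def
    by (auto dest: frequently_ex)
  thus "q \<in> Q" using run_in[OF assms] by auto
qed

theorem lemma1:
  fixes \<Sigma> :: "'a set"
    and Q :: "'q set" and \<delta> :: "'q \<Rightarrow> 'a \<Rightarrow> 'q" and q0 :: 'q and c :: "'q \<Rightarrow> nat"
    and QD :: "'d set" and \<delta>D :: "'d \<Rightarrow> 'a \<Rightarrow> 'd" and qD0 :: 'd and cD :: "'d \<Rightarrow> nat"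
    and Q' :: "'p set" and \<delta>' :: "'p \<Rightarrow> 'a \<Rightarrow> 'p" and q0' :: 'p
    and h :: "'q \<Rightarrow> 'p" and c' :: "'p \<Rightarrow> nat"
    and D :: "(nat \<Rightarrow> 'a) set"
  assumes "dts \<Sigma> Q \<delta> q0"
    and "dts \<Sigma> QD \<delta>D qD0"
    and "D = dpa_lang \<Sigma> \<delta>D qD0 cD"
    and "dts \<Sigma> Q' \<delta>' q0'"
    and "dts_hom \<Sigma> Q \<delta> q0 Q' \<delta>' q0' h"
    and "h ` Q = Q'"
  shows "equiv_mod D (dpa_lang \<Sigma> \<delta>' q0' c') (dpa_lang \<Sigma> \<delta> q0 c) \<longleftrightarrow>
    consistent c'
      {R'. R' \<subseteq> Q' \<and> (\<exists>\<alpha> \<in> dpa_lang \<Sigma> \<delta> q0 c - D. h ` Inf_states \<delta> q0 \<alpha> = R')}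
      {R'. R' \<subseteq> Q' \<and> (\<exists>\<alpha> \<in> (omega_words \<Sigma> - dpa_lang \<Sigma> \<delta> q0 c) - D. h ` Inf_states \<delta> q0 \<alpha> = R')}"
proof -
  have fin: "finite Q" using assms(1) by (simp add: dts_def)
  have key: "Inf_states \<delta>' q0' \<alpha> = h ` Inf_states \<delta> q0 \<alpha>" if "\<alpha> \<in> omega_words \<Sigma>" for \<alpha>
  proof -
    have "Inf_states \<delta>' q0' \<alpha> = {p. \<exists>\<^sub>\<infinity>n. h (run \<delta> q0 \<alpha> n) = p}"
      unfolding Inf_states_def using run_hom[OF assms(1) that assms(5)] by simp
    also have "\<dots> = h ` Inf_states \<delta> q0 \<alpha>"
      unfolding Inf_states_def by (rule inf_image[OF fin run_in[OF assms(1) that]])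
    finally show ?thesis .
  qed
  have sub: "h ` Inf_states \<delta> q0 \<alpha> \<subseteq> Q'" if "\<alpha> \<in> omega_words \<Sigma>" for \<alpha>
    using Inf_sub[OF assms(1) that] assms(6) by auto
  have L'': "\<alpha> \<in> dpa_lang \<Sigma> \<delta>' q0' c' \<longleftrightarrow> \<alpha> \<in> omega_words \<Sigma> \<and> even (Max (c' ` h ` Inf_states \<delta> q0 \<alpha>))" for \<alpha>
    using key by (auto simp: dpa_lang_def)
  have L: "\<alpha> \<in> dpa_lang \<Sigma> \<delta> q0 c \<longleftrightarrow> \<alpha> \<in> omega_words \<Sigma> \<and> even (Max (c ` Inf_states \<delta> q0 \<alpha>))" for \<alpha>
    by (auto simp: dpa_lang_def)
  have E: "equiv_mod D (dpa_lang \<Sigma> \<delta>' q0' c') (dpa_lang \<Sigma> \<delta> q0 c) \<longleftrightarrow>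
    (\<forall>\<alpha>\<in>omega_words \<Sigma> - D. even (Max (c' ` h ` Inf_states \<delta> q0 \<alpha>)) \<longleftrightarrow> even (Max (c ` Inf_states \<delta> q0 \<alpha>)))"
    unfolding equiv_mod_def set_eq_iff using L L'' by blast
  show ?thesis unfolding E consistent_def
  proof (rule iffI, intro conjI ballI)
    assume H: "\<forall>\<alpha>\<in>omega_words \<Sigma> - D. even (Max (c' ` h ` Inf_states \<delta> q0 \<alpha>)) \<longleftrightarrow> even (Max (c ` Inf_states \<delta> q0 \<alpha>))"
    fix R assume "R \<in> {R'. R' \<subseteq> Q' \<and> (\<exists>\<alpha> \<in> dpa_lang \<Sigma> \<delta> q0 c - D. h ` Inf_states \<delta> q0 \<alpha> = R')}"
    then obtain \<alpha> where "\<alpha> \<in> dpa_lang \<Sigma> \<delta> q0 c" "\<alpha> \<notin> D" "R = h ` Inf_states \<delta> q0 \<alpha>" by auto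
    thus "even (Max (c' ` R))" using H L by auto
  next
    assume H: "\<forall>\<alpha>\<in>omega_words \<Sigma> - D. even (Max (c' ` h ` Inf_states \<delta> q0 \<alpha>)) \<longleftrightarrow> even (Max (c ` Inf_states \<delta> q0 \<alpha>))"
    fix R assume "R \<in> {R'. R' \<subseteq> Q' \<and> (\<exists>\<alpha> \<in> (omega_words \<Sigma> - dpa_lang \<Sigma> \<delta> q0 c) - D. h ` Inf_states \<delta> q0 \<alpha> = R')}"
    then obtain \<alpha> where "\<alpha> \<in> omega_words \<Sigma>" "\<alpha> \<notin> dpa_lang \<Sigma> \<delta> q0 c" "\<alpha> \<notin> D" "R = h ` Inf_states \<delta> q0 \<alpha>" by auto
    thus "odd (Max (c' ` R))" using H L by auto
  next
    assume H: "(\<forall>R\<in>{R'. R' \<subseteq> Q' \<and> (\<exists>\<alpha> \<in> dpa_lang \<Sigma> \<delta> q0 c - D. h ` Inf_states \<delta> q0 \<alpha> = R')}. even (Max (c' ` R))) \<and>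
      (\<forall>R\<in>{R'. R' \<subseteq> Q' \<and> (\<exists>\<alpha> \<in> (omega_words \<Sigma> - dpa_lang \<Sigma> \<delta> q0 c) - D. h ` Inf_states \<delta> q0 \<alpha> = R')}. odd (Max (c' ` R)))"
    show "\<forall>\<alpha>\<in>omega_words \<Sigma> - D. even (Max (c' ` h ` Inf_states \<delta> q0 \<alpha>)) \<longleftrightarrow> even (Max (c ` Inf_states \<delta> q0 \<alpha>))"
    proof
    fix \<alpha> assume a: "\<alpha> \<in> omega_words \<Sigma> - D"
    show "even (Max (c' ` h ` Inf_states \<delta> q0 \<alpha>)) \<longleftrightarrow> even (Max (c ` Inf_states \<delta> q0 \<alpha>))"
    proof (cases "\<alpha> \<in> dpa_lang \<Sigma> \<delta> q0 c")
      case True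
      hence "h ` Inf_states \<delta> q0 \<alpha> \<in> {R'. R' \<subseteq> Q' \<and> (\<exists>\<alpha> \<in> dpa_lang \<Sigma> \<delta> q0 c - D. h ` Inf_states \<delta> q0 \<alpha> = R')}"
        using a sub by blast
      thus ?thesis using H True L by auto
    next
      case False
      hence "h ` Inf_states \<delta> q0 \<alpha> \<in> {R'. R' \<subseteq> Q' \<and> (\<exists>\<alpha> \<in> (omega_words \<Sigma> - dpa_lang \<Sigma> \<delta> q0 c) - D. h ` Inf_states \<delta> q0 \<alpha> = R')}"
        using a sub by blast
      thus ?thesis using H False L a by auto
    qed
    qed
  qed
qed

end
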